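(* Let $0\le k\le n$, let $\bar g\in G_k$ have type $\boldsymbol\lambda\in\mathcal{P}(\Phi)$, and let $g=\begin{bmatrix}\bar g&0\\0&I_{n-k}\end{bmatrix}\in G_n$. Suppose all parts of the partition $\boldsymbol\lambda^e=\boldsymbol\lambda(t-1)$ are strictly bigger than $1$. Then an $n\times n$ matrix $\begin{bmatrix}A&B\\C&D\end{bmatrix}$ over $\mathbb F_q$, written in $(k\,|\,n-k)$-block form, which commutes with $g$ is invertible if and only if both $A$ and $D$ are invertible.
   Context: $q$ is a prime power, $G_n=GL_n(\mathbb F_q)$. $\Phi$ is the set of monic irreducible polynomials in $\mathbb F_q[t]$ other than $t$; $\mathcal{P}(\Phi)$ is the set of finitely supported maps from $\Phi$ to partitions. The type of $\bar g\in G_k$ is the unique $\boldsymbol\lambda\in\mathcal{P}(\Phi)$ such that $\mathbb F_q^k$, viewed as an $\mathbb F_q[t]$-module with $t$ acting by $\bar g$, is isomorphic to $\bigoplus_{f,i}\mathbb F_q[t]/(f^{\boldsymbol\lambda_i(f)})$, where $\boldsymbol\lambda(f)=(\boldsymbol\lambda_1(f),\boldsymbol\lambda_2(f),\dots)$. *)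

theory Defs
  imports "Jordan_Normal_Form.Matrix" "HOL-Computational_Algebra.Polynomial"
    "HOL-Computational_Algebra.Factorial_Ring" "HOL-Library.Multiset"
begin

definition Phi :: "'a::field poly set" where
  "Phi = {f. lead_coeff f = 1 \<and> irreducible f \<and> f \<noteq> [:0, 1:]}"

definition is_partition :: "nat list \<Rightarrow> bool" where
  "is_partition ls \<longleftrightarrow> sorted_wrt (\<ge>) ls \<and> (\<forall>x\<in>set ls. 0 < x)"

text \<open>Companion matrix of a monic polynomial p: the matrix of multiplication by t
  on F[t]/(p) in the basis 1, t, ..., t^(d-1).\<close>
definition companion_mat :: "'a::field poly \<Rightarrow> 'a mat" where
  "companion_mat p = (let d = degree p in
     mat d d (\<lambda>(i, j). if j + 1 < d then (if i = j + 1 then 1 else 0)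
                      else - coeff p i))"

text \<open>gbar (a k x k matrix) has type lam: lam is a finitely supported map from Phi to
  partitions and F^k, viewed as F[t]-module with t acting by gbar, is isomorphic to
  the direct sum of the F[t]/(f^(lam f ! i)); equivalently (in matrix language)
  gbar is similar to the block diagonal matrix of the companion matrices of these
  f^(lam f ! i), taken in some order.\<close>
definition has_type :: "nat \<Rightarrow> 'a::field mat \<Rightarrow> ('a poly \<Rightarrow> nat list) \<Rightarrow> bool" where
  "has_type k gbar lam \<longleftrightarrow>
     gbar \<in> carrier_mat k k \<and>
     finite {f. lam f \<noteq> []} \<and>
     (\<forall>f. f \<notin> Phi \<longrightarrow> lam f = []) \<and>
     (\<forall>f. is_partition (lam f)) \<and>
     (\<exists>bs :: ('a poly \<times> nat) list.
        mset bs = (\<Sum>f\<in>{f. lam f \<noteq> []}. mset (map (\<lambda>m. (f, m)) (lam f))) \<and>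
        similar_mat gbar (diag_block_mat (map (\<lambda>(f, m). companion_mat (f ^ m)) bs)))"

end

theory Submission
  imports Defs "Jordan_Normal_Form.Determinant"
begin

definition orth :: "'a::field mat \<Rightarrow> bool" where
 "orth M \<longleftrightarrow> (\<forall>x y. x \<in> carrier_vec (dim_row M) \<longrightarrow> y \<in> carrier_vec (dim_row M) \<longrightarrow>
     M *\<^sub>v x = x \<longrightarrow> transpose_mat M *\<^sub>v y = y \<longrightarrow> y \<bullet> x = 0)"

lemma orth_similar:
  fixes g J :: "'a::field mat"
  assumes "similar_mat g J" "orth J" shows "orth g"
proof -
  obtain n P Q where c: "{g,J,P,Q} \<subseteq> carrier_mat n n" and PQ: "P*Q = 1\<^sub>m n"
    and QP: "Q*P = 1\<^sub>m n" and g: "g = P*J*Q" using similar_matD[OF assms(1)] by blast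
  have cg: "g \<in> carrier_mat n n" and cJ: "J \<in> carrier_mat n n" and cP: "P \<in> carrier_mat n n"
    and cQ: "Q \<in> carrier_mat n n" using c by auto
  have QgJQ: "Q * g = J * Q"
  proof -
    have "Q * g = Q * (P * J * Q)" using g by simp
    also have "\<dots> = (Q * P) * J * Q" using cP cJ cQ
      by (simp add: assoc_mult_mat[of _ n n _ n _ n])
    finally show ?thesis using QP cJ cQ by simp
  qed
  have PJgP: "P * J = g * P"
  proof -
    have "g * P = P * J * Q * P" using g by simp
    also have "\<dots> = P * J * (Q * P)" using cP cJ cQ
      by (simp add: assoc_mult_mat[of _ n n _ n _ n])
    finally show ?thesis using QP cJ cP by simp
  qed
  show ?thesis unfolding orth_def
  proof (intro allI impI)
    fix x y assume x: "x \<in> carrier_vec (dim_row g)" and y: "y \<in> carrier_vec (dim_row g)"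
      and gx: "g *\<^sub>v x = x" and gy: "transpose_mat g *\<^sub>v y = y"
    have x': "x \<in> carrier_vec n" and y': "y \<in> carrier_vec n" using x y cg by auto
    have 1: "J *\<^sub>v (Q *\<^sub>v x) = Q *\<^sub>v x"
    proof -
      have "J *\<^sub>v (Q *\<^sub>v x) = (J * Q) *\<^sub>v x" using cJ cQ x' by simp
      also have "\<dots> = (Q * g) *\<^sub>v x" using QgJQ by simp
      also have "\<dots> = Q *\<^sub>v (g *\<^sub>v x)" using cg cQ x' by simp
      finally show ?thesis using gx by simp
    qed
    have 2: "transpose_mat J *\<^sub>v (transpose_mat P *\<^sub>v y) = transpose_mat P *\<^sub>v y"
    proof -
      have "transpose_mat J *\<^sub>v (transpose_mat P *\<^sub>v y) = (transpose_mat J * transpose_mat P) *\<^sub>v y"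
        using cJ cP y' by simp
      also have "\<dots> = transpose_mat (P * J) *\<^sub>v y" using cJ cP by (simp add: transpose_mult)
      also have "\<dots> = transpose_mat (g * P) *\<^sub>v y" using PJgP by simp
      also have "\<dots> = (transpose_mat P * transpose_mat g) *\<^sub>v y" using cg cP by (simp add: transpose_mult)
      also have "\<dots> = transpose_mat P *\<^sub>v (transpose_mat g *\<^sub>v y)" using cg cP y' by simp
      finally show ?thesis using gy by simp
    qed
    have 3: "y \<bullet> x = (transpose_mat P *\<^sub>v y) \<bullet> (Q *\<^sub>v x)"
    proof -
      have "(transpose_mat P *\<^sub>v y) \<bullet> (Q *\<^sub>v x) = y \<bullet> (P *\<^sub>v (Q *\<^sub>v x))"
        using transpose_vec_mult_scalar[OF cP _ y', of "Q *\<^sub>v x"] cQ x' by simp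
      also have "\<dots> = y \<bullet> ((P * Q) *\<^sub>v x)" using cP cQ x' by simp
      finally show ?thesis using PQ x' by simp
    qed
    show "y \<bullet> x = 0" unfolding 3 using assms(2) 1 2 cJ cP cQ x' y' unfolding orth_def
      by (metis carrier_matD(1) mult_mat_vec_carrier transpose_carrier_mat)
  qed
qed

lemma orth_four_block:
  fixes A B :: "'a::field mat"
  assumes cA: "A \<in> carrier_mat a a" and cB: "B \<in> carrier_mat b b" and oA: "orth A" and oB: "orth B"
  shows "orth (four_block_mat A (0\<^sub>m a b) (0\<^sub>m b a) B)"
  unfolding orth_def
proof (intro allI impI)
  let ?M = "four_block_mat A (0\<^sub>m a b) (0\<^sub>m b a) B"
  fix x y assume x: "x \<in> carrier_vec (dim_row ?M)" and y: "y \<in> carrier_vec (dim_row ?M)"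
    and Mx: "?M *\<^sub>v x = x" and My: "transpose_mat ?M *\<^sub>v y = y"
  have x': "x \<in> carrier_vec (a+b)" and y': "y \<in> carrier_vec (a+b)" using x y cA cB by auto
  define x1 where "x1 = vec_first x a"
  define x2 where "x2 = vec_last x b"
  define y1 where "y1 = vec_first y a"
  define y2 where "y2 = vec_last y b"
  have xs: "x = x1 @\<^sub>v x2" unfolding x1_def x2_def using x' by simp
  have ys: "y = y1 @\<^sub>v y2" unfolding y1_def y2_def using y' by simp
  have c: "x1 \<in> carrier_vec a" "x2 \<in> carrier_vec b" "y1 \<in> carrier_vec a" "y2 \<in> carrier_vec b"
    unfolding x1_def x2_def y1_def y2_def by auto
  have z: "\<And>m l (v::'a vec). v \<in> carrier_vec l \<Longrightarrow> 0\<^sub>m m l *\<^sub>v v = 0\<^sub>v m" by (rule eq_vecI) auto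
  have "?M *\<^sub>v x = (A *\<^sub>v x1 + 0\<^sub>m a b *\<^sub>v x2) @\<^sub>v (0\<^sub>m b a *\<^sub>v x1 + B *\<^sub>v x2)"
    unfolding xs by (rule four_block_mat_mult_vec[OF cA _ _ cB c(1) c(2)]) auto
  also have "\<dots> = (A *\<^sub>v x1) @\<^sub>v (B *\<^sub>v x2)" unfolding z[OF c(1)] z[OF c(2)]
  proof -
    have "A *\<^sub>v x1 \<in> carrier_vec a" "B *\<^sub>v x2 \<in> carrier_vec b" using cA cB c by auto
    thus "(A *\<^sub>v x1 + 0\<^sub>v a) @\<^sub>v (0\<^sub>v b + B *\<^sub>v x2) = (A *\<^sub>v x1) @\<^sub>v (B *\<^sub>v x2)"
      by (simp only: right_zero_vec left_zero_vec)
  qed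
  finally have F: "?M *\<^sub>v x = (A *\<^sub>v x1) @\<^sub>v (B *\<^sub>v x2)" .
  have "(A *\<^sub>v x1) @\<^sub>v (B *\<^sub>v x2) = x1 @\<^sub>v x2" using F Mx xs by metis
  hence ax: "A *\<^sub>v x1 = x1" "B *\<^sub>v x2 = x2" using append_vec_eq[of "A *\<^sub>v x1" a x1] cA c by (metis mult_mat_vec_carrier)+
  have tM: "transpose_mat ?M = four_block_mat (transpose_mat A) (0\<^sub>m a b) (0\<^sub>m b a) (transpose_mat B)"
    using transpose_four_block_mat[OF cA _ _ cB] by simp
  have "transpose_mat ?M *\<^sub>v y = (transpose_mat A *\<^sub>v y1 + 0\<^sub>m a b *\<^sub>v y2) @\<^sub>v (0\<^sub>m b a *\<^sub>v y1 + transpose_mat B *\<^sub>v y2)"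
    unfolding ys tM by (rule four_block_mat_mult_vec) (use cA cB c in auto)
  also have "\<dots> = (transpose_mat A *\<^sub>v y1) @\<^sub>v (transpose_mat B *\<^sub>v y2)" unfolding z[OF c(3)] z[OF c(4)]
  proof -
    have "transpose_mat A *\<^sub>v y1 \<in> carrier_vec a" "transpose_mat B *\<^sub>v y2 \<in> carrier_vec b" using cA cB c by auto
    thus "(transpose_mat A *\<^sub>v y1 + 0\<^sub>v a) @\<^sub>v (0\<^sub>v b + transpose_mat B *\<^sub>v y2) = (transpose_mat A *\<^sub>v y1) @\<^sub>v (transpose_mat B *\<^sub>v y2)"
      by (simp only: right_zero_vec left_zero_vec)
  qed
  finally have G: "transpose_mat ?M *\<^sub>v y = (transpose_mat A *\<^sub>v y1) @\<^sub>v (transpose_mat B *\<^sub>v y2)" .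
  have "(transpose_mat A *\<^sub>v y1) @\<^sub>v (transpose_mat B *\<^sub>v y2) = y1 @\<^sub>v y2" using G My ys by metis
  hence ay: "transpose_mat A *\<^sub>v y1 = y1" "transpose_mat B *\<^sub>v y2 = y2"
    using append_vec_eq[of "transpose_mat A *\<^sub>v y1" a y1] cA c by (metis mult_mat_vec_carrier transpose_carrier_mat)+
  have dA: "dim_row A = a" "dim_row B = b" using cA cB by auto
  have "y1 \<bullet> x1 = 0" using oA[unfolded orth_def dA, rule_format, OF c(1) c(3) ax(1) ay(1)] .
  moreover have "y2 \<bullet> x2 = 0" using oB[unfolded orth_def dA, rule_format, OF c(2) c(4) ax(2) ay(2)] .
  ultimately show "y \<bullet> x = 0" unfolding xs ys scalar_prod_append[OF c(3) c(4) c(1) c(2)] by simp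
qed

lemma orth_nil_aux: "\<And>x y. x \<in> carrier_vec 0 \<Longrightarrow> y \<bullet> x = (0::'a::field)"
    unfolding scalar_prod_def carrier_vec_def by simp

lemma orth_diag_block:
  fixes As :: "'a::field mat list"
  assumes "\<And>A. A \<in> set As \<Longrightarrow> square_mat A \<and> orth A"
  shows "orth (diag_block_mat As)"
  using assms
proof (induction As)
  case Nil
  have d0: "dim_row (0\<^sub>m 0 0 :: 'a mat) = 0" by simp
  show ?case unfolding orth_def diag_block_mat.simps d0 using orth_nil_aux by blast
next
  case (Cons A As)
  have sq: "square_mat A" "orth A" using Cons.prems by auto
  have IH: "orth (diag_block_mat As)" using Cons by auto
  have sqB: "square_mat (diag_block_mat As)" using Cons.prems diag_block_mat_square by auto
  have cA: "A \<in> carrier_mat (dim_row A) (dim_row A)" using sq by (auto simp: square_mat.simps)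
  have cB: "diag_block_mat As \<in> carrier_mat (dim_row (diag_block_mat As)) (dim_row (diag_block_mat As))"
    using sqB by (auto simp: square_mat.simps)
  have eq: "diag_block_mat (A # As) = four_block_mat A (0\<^sub>m (dim_row A) (dim_row (diag_block_mat As)))
      (0\<^sub>m (dim_row (diag_block_mat As)) (dim_row A)) (diag_block_mat As)"
    using cA cB unfolding diag_block_mat.simps Let_def by (metis carrier_matD(2))
  show ?case unfolding eq by (rule orth_four_block[OF cA cB sq(2) IH])
qed

lemma comp_dims: "companion_mat p \<in> carrier_mat (degree p) (degree p)"
  unfolding companion_mat_def Let_def by simp

lemma comp_idx: "i < degree p \<Longrightarrow> j < degree p \<Longrightarrow> companion_mat p $$ (i,j) =
   (if j+1 < degree p then (if i = j+1 then 1 else 0) else - coeff p i)"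
  unfolding companion_mat_def Let_def by simp

lemma comp_mv:
  fixes p :: "'a::field poly"
  assumes d: "degree p = Suc m" and x: "x \<in> carrier_vec (Suc m)" and i: "i < Suc m"
  shows "(companion_mat p *\<^sub>v x) $ i = (if 0 < i then x $ (i-1) else 0) - coeff p i * x $ m"
proof -
  have C: "companion_mat p \<in> carrier_mat (Suc m) (Suc m)" using comp_dims[of p] d by simp
  have "(companion_mat p *\<^sub>v x) $ i = row (companion_mat p) i \<bullet> x" using C i by simp
  also have "\<dots> = (\<Sum>j\<in>{0..<Suc m}. row (companion_mat p) i $ j * x $ j)"
    unfolding scalar_prod_def using x by simp
  also have "\<dots> = (\<Sum>j\<in>{0..<Suc m}. companion_mat p $$ (i,j) * x $ j)"
    using C i by (intro sum.cong) auto
  also have "\<dots> = (\<Sum>j\<in>{0..<m}. companion_mat p $$ (i,j) * x $ j) + companion_mat p $$ (i,m) * x $ m"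
    by simp
  also have "(\<Sum>j\<in>{0..<m}. companion_mat p $$ (i,j) * x $ j) = (\<Sum>j\<in>{0..<m}. (if j = i - 1 \<and> 0 < i then x $ j else 0))"
    using i d by (intro sum.cong) (auto simp: comp_idx)
  also have "\<dots> = (if 0 < i then x $ (i-1) else 0)"
    using i by (cases "0 < i") (auto simp: sum.delta')
  also have "companion_mat p $$ (i,m) = - coeff p i" using i d by (simp add: comp_idx)
  finally show ?thesis by simp
qed

lemma comp_tmv:
  fixes p :: "'a::field poly"
  assumes d: "degree p = Suc m" and y: "y \<in> carrier_vec (Suc m)" and j: "j < Suc m"
  shows "(transpose_mat (companion_mat p) *\<^sub>v y) $ j = (if j < m then y $ (j+1) else - (\<Sum>i<Suc m. coeff p i * y $ i))"
proof -
  have C: "companion_mat p \<in> carrier_mat (Suc m) (Suc m)" using comp_dims[of p] d by simp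
  have "(transpose_mat (companion_mat p) *\<^sub>v y) $ j = row (transpose_mat (companion_mat p)) j \<bullet> y" using C j by simp
  also have "\<dots> = (\<Sum>i\<in>{0..<Suc m}. row (transpose_mat (companion_mat p)) j $ i * y $ i)"
    unfolding scalar_prod_def using y by simp
  also have "\<dots> = (\<Sum>i\<in>{0..<Suc m}. companion_mat p $$ (i,j) * y $ i)"
    using C j by (intro sum.cong) auto
  also have "\<dots> = (if j < m then y $ (j+1) else - (\<Sum>i<Suc m. coeff p i * y $ i))"
  proof (cases "j < m")
    case True
    have "(\<Sum>i\<in>{0..<Suc m}. companion_mat p $$ (i,j) * y $ i) = (\<Sum>i\<in>{0..<Suc m}. if i = j + 1 then y $ i else 0)"
      using True d by (intro sum.cong) (auto simp: comp_idx)
    also have "\<dots> = y $ (j+1)" using True by (simp add: sum.delta')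
    finally show ?thesis using True by simp
  next
    case False
    hence jm: "j = m" using j by simp
    have "(\<Sum>i\<in>{0..<Suc m}. companion_mat p $$ (i,j) * y $ i) = (\<Sum>i\<in>{0..<Suc m}. - (coeff p i * y $ i))"
      using jm d by (intro sum.cong) (auto simp: comp_idx)
    also have "\<dots> = - (\<Sum>i<Suc m. coeff p i * y $ i)" by (simp add: sum_negf atLeast0LessThan)
    finally show ?thesis using False by simp
  qed
  finally show ?thesis .
qed

lemma poly_1_sum:
  fixes q :: "'a::field poly"
  assumes "degree q < n" shows "poly q 1 = (\<Sum>i<n. coeff q i)"
proof -
  have "poly q 1 = (\<Sum>i\<le>degree q. coeff q i)" by (simp add: poly_altdef)
  also have "\<dots> = (\<Sum>i<n. coeff q i)"
    using assms by (intro sum.mono_neutral_left) (auto simp: coeff_eq_0)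
  finally show ?thesis .
qed

lemma aux_eq: fixes a S :: "'a::field" assumes "a = -(a*S)" shows "a*(S+1) = 0"
proof -
  have "a + a*S = 0" using assms eq_neg_iff_add_eq_0 by blast
  thus ?thesis by (simp add: distrib_left add.commute)
qed

lemma orth_companion:
  fixes p :: "'a::field poly"
  assumes monic: "lead_coeff p = 1" and cond: "poly p 1 \<noteq> 0 \<or> poly (pderiv p) 1 = 0"
  shows "orth (companion_mat p)"
  unfolding orth_def
proof (intro allI impI)
  fix x y assume x: "x \<in> carrier_vec (dim_row (companion_mat p))"
    and y: "y \<in> carrier_vec (dim_row (companion_mat p))"
    and Cx: "companion_mat p *\<^sub>v x = x" and Cy: "transpose_mat (companion_mat p) *\<^sub>v y = y"
  have dr: "dim_row (companion_mat p) = degree p" using comp_dims[of p] by auto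
  show "y \<bullet> x = 0"
  proof (cases "degree p")
    case 0
    then show ?thesis using x dr orth_nil_aux by auto
  next
    case (Suc m)
    have x': "x \<in> carrier_vec (Suc m)" and y': "y \<in> carrier_vec (Suc m)" using x y dr Suc by auto
    define s where "s = x $ m"
    have xrec: "x $ (Suc i) = x $ i - coeff p (Suc i) * s" if i: "i < m" for i
    proof -
      have "x $ Suc i = (companion_mat p *\<^sub>v x) $ Suc i" using Cx by simp
      also have "\<dots> = x $ i - coeff p (Suc i) * s" unfolding s_def
        using comp_mv[OF Suc x', of "Suc i"] i by simp
      finally show ?thesis .
    qed
    have ystep: "y $ (Suc j) = y $ j" if j: "j < m" for j
    proof -
      have "y $ j = (transpose_mat (companion_mat p) *\<^sub>v y) $ j" using Cy by simp
      also have "\<dots> = y $ Suc j" using comp_tmv[OF Suc y', of j] j by simp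
      finally show ?thesis by simp
    qed
    have ylast: "y $ m = - (\<Sum>i<Suc m. coeff p i * y $ i)"
    proof -
      have "y $ m = (transpose_mat (companion_mat p) *\<^sub>v y) $ m" using Cy by simp
      also have "\<dots> = - (\<Sum>i<Suc m. coeff p i * y $ i)" using comp_tmv[OF Suc y', of m] by simp
      finally show ?thesis .
    qed
    have yconst: "i < Suc m \<Longrightarrow> y $ i = y $ 0" for i
    proof (induction i)
      case 0 then show ?case by simp
    next
      case (Suc i) then show ?case using ystep[of i] by simp
    qed
    have ysum: "y \<bullet> x = y $ 0 * (\<Sum>i<Suc m. x $ i)"
    proof -
      have "y \<bullet> x = (\<Sum>i\<in>{0..<Suc m}. y $ i * x $ i)" unfolding scalar_prod_def using x' by simp
      also have "\<dots> = (\<Sum>i\<in>{0..<Suc m}. y $ 0 * x $ i)"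
        by (rule sum.cong) (simp, metis atLeastLessThan_iff yconst)
      finally show ?thesis by (simp only: sum_distrib_left atLeast0LessThan)
    qed
    have lc: "coeff p (Suc m) = 1" using monic Suc by simp
    have poly1: "poly p 1 = (\<Sum>i<Suc m. coeff p i) + 1"
      using poly_1_sum[of p "Suc (Suc m)"] Suc lc by simp
    have y0: "y $ 0 * poly p 1 = 0"
    proof -
      have "(\<Sum>i<Suc m. coeff p i * y $ i) = (\<Sum>i<Suc m. coeff p i * y $ 0)"
        by (rule sum.cong) (simp, metis lessThan_iff yconst)
      note e = this
      have e2: "(\<Sum>i<Suc m. coeff p i * y $ 0) = y $ 0 * (\<Sum>i<Suc m. coeff p i)"
        by (simp only: sum_distrib_left mult.commute)
      have "y $ 0 = y $ m" using yconst[of m] by simp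
      also have "\<dots> = - (\<Sum>i<Suc m. coeff p i * y $ i)" by (rule ylast)
      also have "\<dots> = - (y $ 0 * (\<Sum>i<Suc m. coeff p i))" unfolding e e2 ..
      finally show ?thesis unfolding poly1 by (rule aux_eq)
    qed
    have S: "n < Suc m \<Longrightarrow> (\<Sum>i<Suc n. x $ i) = of_nat (Suc n) * x $ n + s * (\<Sum>i<Suc n. of_nat i * coeff p i)" for n
    proof (induction n)
      case 0 then show ?case by simp
    next
      case (Suc n)
      have n: "n < m" using Suc.prems by simp
      have xn: "x $ n = x $ Suc n + coeff p (Suc n) * s" using xrec[OF n] by simp
      have "(\<Sum>i<Suc (Suc n). x $ i) = (\<Sum>i<Suc n. x $ i) + x $ Suc n" by (rule sum.lessThan_Suc)
      also have "\<dots> = of_nat (Suc n) * x $ n + s * (\<Sum>i<Suc n. of_nat i * coeff p i) + x $ Suc n"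
        using Suc.IH n by simp
      also have "\<dots> = of_nat (Suc n) * (x $ Suc n + coeff p (Suc n) * s) + s * (\<Sum>i<Suc n. of_nat i * coeff p i) + x $ Suc n"
        by (simp only: xn)
      also have "\<dots> = of_nat (Suc (Suc n)) * x $ Suc n + s * ((\<Sum>i<Suc n. of_nat i * coeff p i) + of_nat (Suc n) * coeff p (Suc n))"
        by (simp add: algebra_simps)
      also have "(\<Sum>i<Suc n. of_nat i * coeff p i) + of_nat (Suc n) * coeff p (Suc n) = (\<Sum>i<Suc (Suc n). of_nat i * coeff p i)"
        by (rule sum.lessThan_Suc[symmetric])
      finally show ?case .
    qed
    have dp: "degree (pderiv p) < Suc m"
    proof -
      have "degree (pderiv p) \<le> m"
        by (rule degree_le) (use Suc in \<open>auto simp: coeff_pderiv coeff_eq_0\<close>)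
      thus ?thesis by simp
    qed
    have deriv1: "poly (pderiv p) 1 = (\<Sum>i<Suc (Suc m). of_nat i * coeff p i)"
    proof -
      have "poly (pderiv p) 1 = (\<Sum>i<Suc m. of_nat (Suc i) * coeff p (Suc i))"
        using poly_1_sum[OF dp] by (simp add: coeff_pderiv)
      also have "\<dots> = (\<Sum>i<Suc (Suc m). of_nat i * coeff p i)"
        by (subst sum.lessThan_Suc_shift) simp
      finally show ?thesis .
    qed
    have xsum: "(\<Sum>i<Suc m. x $ i) = s * poly (pderiv p) 1"
    proof -
      have e1: "(\<Sum>i<Suc m. x $ i) = of_nat (Suc m) * s + s * (\<Sum>i<Suc m. of_nat i * coeff p i)"
        using S[of m] unfolding s_def by simp
      have e2: "(\<Sum>i<Suc m. of_nat i * coeff p i) + of_nat (Suc m) * coeff p (Suc m) = (\<Sum>i<Suc (Suc m). of_nat i * coeff p i)"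
        by (rule sum.lessThan_Suc[symmetric])
      have e3: "of_nat (Suc m) * s + s * (\<Sum>i<Suc m. of_nat i * coeff p i) = s * ((\<Sum>i<Suc m. of_nat i * coeff p i) + of_nat (Suc m) * coeff p (Suc m))"
        unfolding lc by (simp add: distrib_left mult.commute add.commute)
      show ?thesis unfolding e1 e3 e2 deriv1 ..
    qed
    from cond show ?thesis
    proof
      assume "poly p 1 \<noteq> 0" then have "y $ 0 = 0" using y0 by simp
      then show ?thesis using ysum by simp
    next
      assume "poly (pderiv p) 1 = 0" then show ?thesis using ysum xsum by simp
    qed
  qed
qed

lemma monic_irr_root1:
  fixes f :: "'a::field poly"
  assumes lc: "lead_coeff f = 1" and irr: "irreducible f" and r: "poly f 1 = 0"
  shows "f = [:-1,1:]"
proof -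
  have "[:-1,1:] dvd f" using r poly_eq_0_iff_dvd[of f 1] by simp
  then obtain q where fq: "f = [:-1,1:] * q" by (auto elim: dvdE)
  have nu: "\<not> [:-1,1:] dvd (1::'a poly)"
    using is_unit_iff_degree[of "[:-1,1:]::'a poly"] by simp
  have "q dvd 1" using irreducibleD[OF irr fq] nu by auto
  hence q00: "q \<noteq> 0" by auto
  have q0: "q \<noteq> 0" "degree q = 0" using is_unit_iff_degree[OF q00] \<open>q dvd 1\<close> q00 by auto
  have "lead_coeff f = lead_coeff [:-1,1:] * lead_coeff q" unfolding fq by (rule lead_coeff_mult)
  hence "lead_coeff q = 1" using lc by simp
  hence "q = 1" using q0 by (metis degree_0_id one_pCons)
  thus ?thesis using fq by simp
qed

lemma orth_gbar:
  fixes gbar :: "'a::field mat"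
  assumes ht: "has_type k gbar lam" and parts: "\<forall>p\<in>set (lam [:-1, 1:]). p > 1"
  shows "orth gbar"
proof -
  from ht obtain bs :: "('a poly \<times> nat) list" where
    fin: "finite {f. lam f \<noteq> []}" and phi: "\<forall>f. f \<notin> Phi \<longrightarrow> lam f = []" and
    ms: "mset bs = (\<Sum>f\<in>{f. lam f \<noteq> []}. mset (map (\<lambda>m. (f, m)) (lam f)))" and
    sim: "similar_mat gbar (diag_block_mat (map (\<lambda>(f, m). companion_mat (f ^ m)) bs))"
    unfolding has_type_def by blast
  have mem: "f \<in> Phi \<and> m \<in> set (lam f)" if fm: "(f,m) \<in> set bs" for f m
  proof -
    have "(f,m) \<in># mset bs" using fm by simp
    hence "(f,m) \<in> (\<Union>g\<in>{f. lam f \<noteq> []}. set_mset (mset (map (\<lambda>m. (g, m)) (lam g))))"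
      unfolding ms set_mset_sum[OF fin] .
    hence "m \<in> set (lam f)" "lam f \<noteq> []" by auto
    thus ?thesis using phi by auto
  qed
  have blk: "square_mat A \<and> orth A" if A: "A \<in> set (map (\<lambda>(f, m). companion_mat (f ^ m)) bs)" for A
  proof -
    obtain f m where fm: "(f,m) \<in> set bs" and Aeq: "A = companion_mat (f ^ m)" using A by auto
    have fP: "f \<in> Phi" and mf: "m \<in> set (lam f)" using mem[OF fm] by auto
    have lcf: "lead_coeff f = 1" and irr: "irreducible f" using fP unfolding Phi_def by auto
    have lc: "lead_coeff (f ^ m) = 1" using lcf by (simp add: lead_coeff_power)
    have cond: "poly (f ^ m) 1 \<noteq> 0 \<or> poly (pderiv (f ^ m)) 1 = 0"
    proof (cases "poly f 1 = 0")
      case True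
      hence f1: "f = [:-1,1:]" using monic_irr_root1[OF lcf irr] by simp
      have "m \<in> set (lam [:-1,1:])" using mf unfolding f1 .
      hence "m > 1" using parts by blast
      have mj: "m = Suc (Suc (m - 2))" using \<open>m > 1\<close> by arith
      have "poly (pderiv (f ^ Suc (Suc (m - 2)))) 1 = of_nat (Suc (Suc (m - 2))) * (poly f 1 ^ Suc (m - 2)) * poly (pderiv f) 1"
        by (simp only: pderiv_power_Suc poly_mult poly_smult poly_power)
      also have "\<dots> = 0" using True by simp
      finally have "poly (pderiv (f ^ m)) 1 = 0" using mj by metis
      thus ?thesis by simp
    next
      case False
      thus ?thesis by simp
    qed
    have "square_mat A" unfolding Aeq using comp_dims[of "f ^ m"] by auto
    moreover have "orth A" unfolding Aeq by (rule orth_companion[OF lc cond])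
    ultimately show ?thesis by simp
  qed
  show ?thesis by (rule orth_similar[OF sim orth_diag_block]) (use blk in blast)
qed

lemma col_mult_vec:
  assumes "A \<in> carrier_mat nr n" "B \<in> carrier_mat n nc" "j < nc"
  shows "col (A * B) j = A *\<^sub>v col B j"
  by (rule eq_vecI) (use assms in auto)

lemma orth_apply:
  fixes g :: "'a::field mat"
  assumes og: "orth g" and cg: "g \<in> carrier_mat k k" and cB: "B \<in> carrier_mat k l"
    and cC: "C \<in> carrier_mat l' k" and gB: "g * B = B" and Cg: "C * g = C"
    and cX: "X \<in> carrier_mat k k" and Xg: "X * g = g * X"
  shows "C * X * B = 0\<^sub>m l' l"
proof (rule eq_matI)
  show "dim_row (C * X * B) = dim_row (0\<^sub>m l' l)" "dim_col (C * X * B) = dim_col (0\<^sub>m l' l)"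
    using cC cB by auto
  fix i j assume i: "i < dim_row (0\<^sub>m l' l)" and j: "j < dim_col (0\<^sub>m l' l)"
  have i': "i < l'" and j': "j < l" using i j by auto
  define v where "v = col B j"
  define u where "u = row C i"
  have cv: "v \<in> carrier_vec k" unfolding v_def using cB j' by auto
  have cu: "u \<in> carrier_vec k" unfolding u_def using cC i' by auto
  have gv: "g *\<^sub>v v = v"
  proof -
    have "g *\<^sub>v v = col (g * B) j" unfolding v_def using col_mult_vec[OF cg cB j'] by simp
    thus ?thesis using gB v_def by simp
  qed
  have gw: "g *\<^sub>v (X *\<^sub>v v) = X *\<^sub>v v"
  proof -
    have "g *\<^sub>v (X *\<^sub>v v) = (g * X) *\<^sub>v v" using cg cX cv by simp
    also have "\<dots> = (X * g) *\<^sub>v v" using Xg by simp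
    also have "\<dots> = X *\<^sub>v (g *\<^sub>v v)" using cg cX cv by simp
    finally show ?thesis using gv by simp
  qed
  have gu: "transpose_mat g *\<^sub>v u = u"
  proof -
    have "transpose_mat g *\<^sub>v u = col (transpose_mat g * transpose_mat C) i"
      unfolding u_def using col_mult_vec[of "transpose_mat g" k k "transpose_mat C" l' i] cg cC i' by simp
    also have "transpose_mat g * transpose_mat C = transpose_mat (C * g)"
      using cg cC by (simp add: transpose_mult)
    finally show ?thesis using Cg u_def cC i' by simp
  qed
  have "u \<bullet> (X *\<^sub>v v) = 0"
    using og[unfolded orth_def, rule_format, of "X *\<^sub>v v" u] cg cX cv cu gw gu by simp
  moreover have "(C * X * B) $$ (i,j) = u \<bullet> (X *\<^sub>v v)"
  proof -
    have "C * X * B = C * (X * B)" using cC cX cB by (simp add: assoc_mult_mat[of _ l' k _ k _ l])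
    hence "(C * X * B) $$ (i,j) = row C i \<bullet> col (X * B) j" using cC cX cB i' j' by simp
    also have "col (X * B) j = X *\<^sub>v v" unfolding v_def using col_mult_vec[OF cX cB j'] .
    finally show ?thesis unfolding u_def .
  qed
  ultimately show "(C * X * B) $$ (i,j) = 0\<^sub>m l' l $$ (i,j)" using i' j' by simp
qed

lemma inv_mat_obtain:
  fixes A :: "'a::field mat"
  assumes "invertible_mat A" "A \<in> carrier_mat n n"
  shows "\<exists>Ai \<in> carrier_mat n n. A * Ai = 1\<^sub>m n \<and> Ai * A = 1\<^sub>m n"
proof -
  obtain B where AB: "A * B = 1\<^sub>m (dim_row A)" and BA: "B * A = 1\<^sub>m (dim_row B)"
    using assms(1) unfolding invertible_mat_def inverts_mat_def by blast
  have "dim_col B = n" using AB assms(2) by (metis carrier_matD(1) index_mult_mat(3) index_one_mat(3))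
  moreover have "dim_row B = n" using BA assms(2) by (metis carrier_matD(2) index_mult_mat(3) index_one_mat(3))
  ultimately show ?thesis using AB BA assms(2) by (intro bexI[of _ B]) auto
qed

lemma invertible_from_right_inv:
  fixes A :: "'a::field mat"
  assumes "A \<in> carrier_mat n n" "Ai \<in> carrier_mat n n" "A * Ai = 1\<^sub>m n"
  shows "invertible_mat A"
proof -
  have "Ai * A = 1\<^sub>m n" using mat_mult_left_right_inverse[OF assms] .
  thus ?thesis using assms unfolding invertible_mat_def inverts_mat_def square_mat.simps
    by (metis carrier_matD(1) carrier_matD(2))
qed

lemma invertible_from_kernel:
  fixes M :: "'a::field mat"
  assumes cM: "M \<in> carrier_mat n n" and ker: "\<And>v. v \<in> carrier_vec n \<Longrightarrow> M *\<^sub>v v = 0\<^sub>v n \<Longrightarrow> v = 0\<^sub>v n"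
  shows "invertible_mat M"
proof -
  have "det M \<noteq> 0" using det_0_iff_vec_prod_zero[OF cM] ker by blast
  from det_non_zero_imp_unit[OF cM this, of undefined]
  obtain X where "X \<in> carrier_mat n n" "M * X = 1\<^sub>m n"
    unfolding Units_def ring_mat_simps by auto
  thus ?thesis using invertible_from_right_inv[OF cM] by blast
qed

lemma four_block_inj:
  assumes c: "A \<in> carrier_mat r1 c1" "A' \<in> carrier_mat r1 c1" "B \<in> carrier_mat r1 c2" "B' \<in> carrier_mat r1 c2"
    "C \<in> carrier_mat r2 c1" "C' \<in> carrier_mat r2 c1" "D \<in> carrier_mat r2 c2" "D' \<in> carrier_mat r2 c2"
    and eq: "four_block_mat A B C D = four_block_mat A' B' C' D'"
  shows "A = A'" "B = B'" "C = C'" "D = D'"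
proof -
  have e: "four_block_mat A B C D $$ (i,j) = four_block_mat A' B' C' D' $$ (i,j)" for i j using eq by simp
  show "A = A'"
  proof (rule eq_matI)
    fix i j assume "i < dim_row A'" "j < dim_col A'"
    thus "A $$ (i,j) = A' $$ (i,j)" using e[of i j] c by auto
  qed (use assms in auto)
  show "B = B'"
  proof (rule eq_matI)
    fix i j assume "i < dim_row B'" "j < dim_col B'"
    thus "B $$ (i,j) = B' $$ (i,j)" using e[of i "j + c1"] c by auto
  qed (use assms in auto)
  show "C = C'"
  proof (rule eq_matI)
    fix i j assume "i < dim_row C'" "j < dim_col C'"
    thus "C $$ (i,j) = C' $$ (i,j)" using e[of "i + r1" j] c by auto
  qed (use assms in auto)
  show "D = D'"
  proof (rule eq_matI)
    fix i j assume "i < dim_row D'" "j < dim_col D'"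
    thus "D $$ (i,j) = D' $$ (i,j)" using e[of "i + r1" "j + c1"] c by auto
  qed (use assms in auto)
qed

lemma block_comm:
  fixes g A B C D :: "'a::field mat"
  assumes cg: "g \<in> carrier_mat k k" and cA: "A \<in> carrier_mat k k" and cB: "B \<in> carrier_mat k m"
    and cC: "C \<in> carrier_mat m k" and cD: "D \<in> carrier_mat m m"
    and eq: "four_block_mat A B C D * four_block_mat g (0\<^sub>m k m) (0\<^sub>m m k) (1\<^sub>m m)
       = four_block_mat g (0\<^sub>m k m) (0\<^sub>m m k) (1\<^sub>m m) * four_block_mat A B C D"
  shows "A * g = g * A" "g * B = B" "C * g = C"
proof -
  have z1: "0\<^sub>m k m \<in> carrier_mat k m" "0\<^sub>m m k \<in> carrier_mat m k" "1\<^sub>m m \<in> carrier_mat m m" by auto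
  have MG: "four_block_mat A B C D * four_block_mat g (0\<^sub>m k m) (0\<^sub>m m k) (1\<^sub>m m) = four_block_mat (A * g) B (C * g) D"
    by (subst mult_four_block_mat[OF cA cB cC cD cg z1]) (use cA cB cC cD cg in simp)
  have GM: "four_block_mat g (0\<^sub>m k m) (0\<^sub>m m k) (1\<^sub>m m) * four_block_mat A B C D = four_block_mat (g * A) (g * B) C D"
    by (subst mult_four_block_mat[OF cg z1(1) z1(2) z1(3) cA cB cC cD]) (use cA cB cC cD cg in simp)
  have e: "four_block_mat (A * g) B (C * g) D = four_block_mat (g * A) (g * B) C D"
    using eq MG GM by simp
  have c2: "A * g \<in> carrier_mat k k" "g * A \<in> carrier_mat k k" "g * B \<in> carrier_mat k m" "C * g \<in> carrier_mat m k"
    using cA cg cB cC by auto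
  note fi = four_block_inj[OF c2(1) c2(2) cB c2(3) c2(4) cC cD cD e]
  show "A * g = g * A" "g * B = B" "C * g = C" using fi by auto
qed

lemma mat_vec_zero: "A \<in> carrier_mat r c \<Longrightarrow> A *\<^sub>v 0\<^sub>v c = 0\<^sub>v r"
  by (rule eq_vecI) auto

lemma zero_vec_append: "0\<^sub>v (a + b) = 0\<^sub>v a @\<^sub>v 0\<^sub>v b"
  by (rule eq_vecI) auto

lemma dir_if:
  fixes g A B C D :: "'a::field mat"
  assumes og: "orth g" and cg: "g \<in> carrier_mat k k" and cA: "A \<in> carrier_mat k k" and cB: "B \<in> carrier_mat k m"
    and cC: "C \<in> carrier_mat m k" and cD: "D \<in> carrier_mat m m"
    and Ag: "A * g = g * A" and gB: "g * B = B" and Cg: "C * g = C"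
    and iA: "invertible_mat A" and iD: "invertible_mat D"
  shows "invertible_mat (four_block_mat A B C D)"
proof -
  obtain Ai where cAi: "Ai \<in> carrier_mat k k" and AAi: "A * Ai = 1\<^sub>m k" and AiA: "Ai * A = 1\<^sub>m k"
    using inv_mat_obtain[OF iA cA] by blast
  obtain Di where cDi: "Di \<in> carrier_mat m m" and DDi: "D * Di = 1\<^sub>m m" and DiD: "Di * D = 1\<^sub>m m"
    using inv_mat_obtain[OF iD cD] by blast
  have Aig: "Ai * g = g * Ai"
  proof -
    have "Ai * g = Ai * g * (A * Ai)" using AAi cAi cg by simp
    also have "\<dots> = Ai * (g * A) * Ai" using cAi cg cA by (simp add: assoc_mult_mat[of _ k k _ k _ k])
    also have "\<dots> = Ai * (A * g) * Ai" using Ag by simp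
    also have "\<dots> = (Ai * A) * g * Ai" using cAi cg cA by (simp add: assoc_mult_mat[of _ k k _ k _ k])
    also have "\<dots> = g * Ai" using AiA cAi cg by simp
    finally show ?thesis .
  qed
  have CAB: "C * Ai * B = 0\<^sub>m m m" by (rule orth_apply[OF og cg cB cC gB Cg cAi Aig])
  have cM: "four_block_mat A B C D \<in> carrier_mat (k + m) (k + m)" using cA cD by simp
  show ?thesis
  proof (rule invertible_from_kernel[OF cM])
    fix v assume v: "v \<in> carrier_vec (k + m)" and Mv: "four_block_mat A B C D *\<^sub>v v = 0\<^sub>v (k + m)"
    define x where "x = vec_first v k"
    define y where "y = vec_last v m"
    have vxy: "v = x @\<^sub>v y" unfolding x_def y_def using v by simp
    have cx: "x \<in> carrier_vec k" and cy: "y \<in> carrier_vec m" unfolding x_def y_def by auto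
    have "(A *\<^sub>v x + B *\<^sub>v y) @\<^sub>v (C *\<^sub>v x + D *\<^sub>v y) = 0\<^sub>v k @\<^sub>v 0\<^sub>v m"
      using Mv unfolding vxy zero_vec_append four_block_mat_mult_vec[OF cA cB cC cD cx cy] .
    hence e1: "A *\<^sub>v x + B *\<^sub>v y = 0\<^sub>v k" and e2: "C *\<^sub>v x + D *\<^sub>v y = 0\<^sub>v m"
      using append_vec_eq[of "A *\<^sub>v x + B *\<^sub>v y" k "0\<^sub>v k"] cA cB cx cy by auto
    have Cx: "C *\<^sub>v x = 0\<^sub>v m"
    proof -
      have "0\<^sub>v m = (C * Ai) *\<^sub>v (A *\<^sub>v x + B *\<^sub>v y)" using e1 mat_vec_zero[of "C * Ai" m k] cC cAi by simp
      also have "\<dots> = (C * Ai) *\<^sub>v (A *\<^sub>v x) + (C * Ai) *\<^sub>v (B *\<^sub>v y)"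
        by (rule mult_add_distrib_mat_vec[of _ m k]) (use cC cAi cA cB cx cy in auto)
      also have "(C * Ai) *\<^sub>v (A *\<^sub>v x) = C *\<^sub>v x"
      proof -
        have "(C * Ai) *\<^sub>v (A *\<^sub>v x) = C *\<^sub>v ((Ai * A) *\<^sub>v x)" using cC cAi cA cx
          by (simp add: assoc_mult_mat_vec[of _ m k _ k])
        thus ?thesis using AiA cx by simp
      qed
      also have "(C * Ai) *\<^sub>v (B *\<^sub>v y) = (C * Ai * B) *\<^sub>v y" using cC cAi cB cy
        by (simp add: assoc_mult_mat_vec[of _ m k _ m])
      also have "\<dots> = 0\<^sub>v m" unfolding CAB
        by (rule eq_vecI) (use cy in auto)
      finally show ?thesis using cC cx by simp
    qed
    have Dy: "D *\<^sub>v y = 0\<^sub>v m" using e2 unfolding Cx using cD cy by simp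
    have y0: "y = 0\<^sub>v m"
    proof -
      have "y = (Di * D) *\<^sub>v y" using DiD cy by simp
      also have "\<dots> = Di *\<^sub>v (D *\<^sub>v y)" using cDi cD cy by (simp add: assoc_mult_mat_vec[of _ m m _ m])
      finally show ?thesis unfolding Dy using mat_vec_zero[OF cDi] by simp
    qed
    have Ax: "A *\<^sub>v x = 0\<^sub>v k" using e1 unfolding y0 mat_vec_zero[OF cB] using cA cx by simp
    have x0: "x = 0\<^sub>v k"
    proof -
      have "x = (Ai * A) *\<^sub>v x" using AiA cx by simp
      also have "\<dots> = Ai *\<^sub>v (A *\<^sub>v x)" using cAi cA cx by (simp add: assoc_mult_mat_vec[of _ k k _ k])
      finally show ?thesis unfolding Ax using mat_vec_zero[OF cAi] by simp
    qed
    show "v = 0\<^sub>v (k + m)" unfolding vxy x0 y0 zero_vec_append ..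
  qed
qed

lemma dir_onlyif:
  fixes g A B C D :: "'a::field mat"
  assumes og: "orth g" and cg: "g \<in> carrier_mat k k" and cA: "A \<in> carrier_mat k k" and cB: "B \<in> carrier_mat k m"
    and cC: "C \<in> carrier_mat m k" and cD: "D \<in> carrier_mat m m"
    and eq: "four_block_mat A B C D * four_block_mat g (0\<^sub>m k m) (0\<^sub>m m k) (1\<^sub>m m)
       = four_block_mat g (0\<^sub>m k m) (0\<^sub>m m k) (1\<^sub>m m) * four_block_mat A B C D"
    and iM: "invertible_mat (four_block_mat A B C D)"
  shows "invertible_mat A \<and> invertible_mat D"
proof -
  define G where "G = four_block_mat g (0\<^sub>m k m) (0\<^sub>m m k) (1\<^sub>m m)"
  define M where "M = four_block_mat A B C D"
  have gB: "g * B = B" and Cg: "C * g = C" using block_comm[OF cg cA cB cC cD eq] by auto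
  have cM: "M \<in> carrier_mat (k + m) (k + m)" unfolding M_def using cA cD by simp
  have cG: "G \<in> carrier_mat (k + m) (k + m)" unfolding G_def using cg by simp
  obtain N where cN: "N \<in> carrier_mat (k + m) (k + m)" and MN: "M * N = 1\<^sub>m (k + m)" and NM: "N * M = 1\<^sub>m (k + m)"
    using inv_mat_obtain[OF iM[folded M_def] cM] by blast
  have MG: "M * G = G * M" using eq unfolding M_def G_def .
  have NG: "N * G = G * N"
  proof -
    have "N * G = N * G * (M * N)" using MN cN cG by simp
    also have "\<dots> = N * (G * M) * N" using cN cG cM by (simp add: assoc_mult_mat[of _ "k+m" "k+m" _ "k+m" _ "k+m"])
    also have "\<dots> = N * (M * G) * N" using MG by simp
    also have "\<dots> = (N * M) * G * N" using cN cG cM by (simp add: assoc_mult_mat[of _ "k+m" "k+m" _ "k+m" _ "k+m"])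
    also have "\<dots> = G * N" using NM cN cG by simp
    finally show ?thesis .
  qed
  obtain P Q R S where sb: "split_block N k k = (P, Q, R, S)" by (metis prod_cases4)
  have dN: "dim_row N = k + m" "dim_col N = k + m" using cN by auto
  note spl = split_block[OF sb dN]
  have cP: "P \<in> carrier_mat k k" and cQ: "Q \<in> carrier_mat k m" and cR: "R \<in> carrier_mat m k"
    and cS: "S \<in> carrier_mat m m" and Neq: "N = four_block_mat P Q R S" using spl by auto
  have gQ: "g * Q = Q" and Rg: "R * g = R"
    using block_comm[OF cg cP cQ cR cS NG[unfolded Neq G_def]] by auto
  have c1: "1\<^sub>m k \<in> carrier_mat k k" by simp
  have RB: "R * B = 0\<^sub>m m m"
    using orth_apply[OF og cg cB cR gB Rg c1] cR cg by simp
  have CQ: "C * Q = 0\<^sub>m m m"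
    using orth_apply[OF og cg cQ cC gQ Cg c1] cC cg by simp
  have "M * N = four_block_mat (A * P + B * R) (A * Q + B * S) (C * P + D * R) (C * Q + D * S)"
    unfolding M_def Neq by (rule mult_four_block_mat[OF cA cB cC cD cP cQ cR cS])
  hence fb: "four_block_mat (A * P + B * R) (A * Q + B * S) (C * P + D * R) (C * Q + D * S)
      = four_block_mat (1\<^sub>m k) (0\<^sub>m k m) (0\<^sub>m m k) (1\<^sub>m m)" using MN by simp
  have cs: "A * P + B * R \<in> carrier_mat k k" "A * Q + B * S \<in> carrier_mat k m"
    "C * P + D * R \<in> carrier_mat m k" "C * Q + D * S \<in> carrier_mat m m"
    using cA cB cC cD cP cQ cR cS by auto
  note fi = four_block_inj[OF cs(1) _ cs(2) _ cs(3) _ cs(4) _ fb]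
  have APBR: "A * P + B * R = 1\<^sub>m k" and CQDS: "C * Q + D * S = 1\<^sub>m m" using fi by auto
  have DS: "D * S = 1\<^sub>m m" using CQDS unfolding CQ using cD cS by simp
  have iD: "invertible_mat D" by (rule invertible_from_right_inv[OF cD cS DS])
  define Z where "Z = B * R"
  have cZ: "Z \<in> carrier_mat k k" unfolding Z_def using cB cR by auto
  have cAP: "A * P \<in> carrier_mat k k" using cA cP by auto
  have h1: "(A * P + Z) * Z = Z" using APBR cZ cB unfolding Z_def by simp
  have h2: "(A * P + Z) * Z = A * P * Z + Z * Z" by (rule add_mult_distrib_mat[OF cAP cZ cZ])
  have h3: "Z * Z = 0\<^sub>m k k"
  proof -
    have "Z * Z = B * (R * B) * R" unfolding Z_def using cB cR
      by (simp add: assoc_mult_mat[of B k m R k "B * R" k] assoc_mult_mat[of R m k B m R k] assoc_mult_mat[of B k m "R * B" m R k])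
    also have "\<dots> = 0\<^sub>m k k" unfolding RB using cB cR by simp
    finally show ?thesis .
  qed
  have h4: "A * P * Z = Z" using h1 unfolding h2 h3 using cAP cZ by simp
  have h5: "A * (P + P * Z) = 1\<^sub>m k"
  proof -
    have "A * (P + P * Z) = A * P + A * (P * Z)"
      by (rule mult_add_distrib_mat[OF cA cP]) (use cP cZ in auto)
    also have "A * (P * Z) = A * P * Z" using cA cP cZ by (simp add: assoc_mult_mat[of _ k k _ k _ k])
    also have "A * P + A * P * Z = A * P + Z" unfolding h4 ..
    also have "\<dots> = 1\<^sub>m k" unfolding Z_def by (rule APBR)
    finally show ?thesis .
  qed
  have "invertible_mat A" by (rule invertible_from_right_inv[OF cA _ h5]) (use cP cZ in auto)
  thus ?thesis using iD by simp
qed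

theorem corollary2p7:
  fixes k n :: nat
    and gbar A B C D :: "'a::{finite, field} mat"
    and lam :: "'a poly \<Rightarrow> nat list"
  assumes "k \<le> n"
    and "gbar \<in> carrier_mat k k" and "invertible_mat gbar"
    and "has_type k gbar lam"
    and "\<forall>p\<in>set (lam [:-1, 1:]). p > 1"
    and "A \<in> carrier_mat k k" and "B \<in> carrier_mat k (n - k)"
    and "C \<in> carrier_mat (n - k) k" and "D \<in> carrier_mat (n - k) (n - k)"
    and "four_block_mat A B C D * four_block_mat gbar (0\<^sub>m k (n - k)) (0\<^sub>m (n - k) k) (1\<^sub>m (n - k))
       = four_block_mat gbar (0\<^sub>m k (n - k)) (0\<^sub>m (n - k) k) (1\<^sub>m (n - k)) * four_block_mat A B C D"
  shows "invertible_mat (four_block_mat A B C D) \<longleftrightarrow> invertible_mat A \<and> invertible_mat D"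
proof -
  have og: "orth gbar" by (rule orth_gbar[OF assms(4) assms(5)])
  show ?thesis
  proof
    assume "invertible_mat (four_block_mat A B C D)"
    then show "invertible_mat A \<and> invertible_mat D"
      by (rule dir_onlyif[OF og assms(2) assms(6) assms(7) assms(8) assms(9) assms(10)])
  next
    assume inv: "invertible_mat A \<and> invertible_mat D"
    have bc: "A * gbar = gbar * A" "gbar * B = B" "C * gbar = C"
      using block_comm[OF assms(2) assms(6) assms(7) assms(8) assms(9) assms(10)] by auto
    show "invertible_mat (four_block_mat A B C D)"
      using dir_if[OF og assms(2) assms(6) assms(7) assms(8) assms(9) bc] inv by blast
  qed
qed

end
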